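(* Let $\ell$ be an integer with $\ell\ge 6$. Then the integer program $$\text{minimize } x+2y+3z \quad\text{subject to}\quad x+y+z-s=\binom{\ell}{2}-\ell,\quad x\le \binom{s}{2},\quad x,y,z,s\in\mathbb{N}$$ has a unique optimal solution, namely $x=\binom{\ell}{2}$, $y=0$, $z=0$, $s=\ell$.
   Context: $\mathbb{N}$ denotes the set of non-negative integers, and $\binom{s}{2}=s(s-1)/2$. *)

theory Defs
  imports Main
begin

definition feasible :: "nat \<Rightarrow> nat \<times> nat \<times> nat \<times> nat \<Rightarrow> bool" where
  "feasible l p = (case p of (x, y, z, s) \<Rightarrow>
      int x + int y + int z - int s = int (l choose 2) - int l \<and> x \<le> s choose 2)"

definition objective :: "nat \<times> nat \<times> nat \<times> nat \<Rightarrow> nat" where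
  "objective p = (case p of (x, y, z, s) \<Rightarrow> x + 2 * y + 3 * z)"

definition optimal :: "nat \<Rightarrow> nat \<times> nat \<times> nat \<times> nat \<Rightarrow> bool" where
  "optimal l p = (feasible l p \<and> (\<forall>q. feasible l q \<longrightarrow> objective p \<le> objective q))"

end

theory Submission
  imports Defs
begin

lemma two_choose: "2 * int (n choose 2) = int n * (int n - 1)"
proof -
  have ev: "even (n * (n - 1))" by (cases "even n") auto
  have "2 * (n choose 2) = n * (n - 1)"
    unfolding choose_two using ev by simp
  then show ?thesis
  proof (cases n)
    case 0 then show ?thesis by simp
  next
    case (Suc m)
    have "int (2 * (n choose 2)) = int (n * m)" using \<open>2 * (n choose 2) = n * (n - 1)\<close> Suc by simp
    then show ?thesis using Suc by (simp add: algebra_simps)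
  qed
qed

lemma key:
  assumes l: "l \<ge> 6" and f: "feasible l (x, y, z, s)"
  shows "int (objective (x,y,z,s)) \<ge> int (l choose 2) \<and>
    (int (objective (x,y,z,s)) = int (l choose 2) \<longrightarrow> (x,y,z,s) = (l choose 2, 0, 0, l))"
proof -
  define cl where "cl = int (l choose 2)"
  define cs where "cs = int (s choose 2)"
  have e: "int x + int y + int z - int s = cl - int l" and xs: "int x \<le> cs"
    using f by (auto simp: feasible_def cl_def cs_def)
  have o: "int (objective (x,y,z,s)) = int x + 2 * int y + 3 * int z"
    by (simp add: objective_def)
  have 2: "2 * cl = int l * (int l - 1)" "2 * cs = int s * (int s - 1)"
    using two_choose cl_def cs_def by auto
  have nn: "int y \<ge> 0" "int z \<ge> 0" by simp_all
  have ccl: "int (l choose 2) = cl" by (simp add: cl_def)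
  consider "s < l" | "s > l" | "s = l" by linarith
  then show ?thesis
  proof cases
    case 1
    have "(int l - int s) * (int l + int s - 1) \<ge> (int l - int s) * 5"
      using 1 l by (intro mult_left_mono) auto
    moreover have "2 * (cl - cs) = (int l - int s) * (int l + int s - 1)"
      using 2 by (simp add: algebra_simps)
    ultimately have "2 * (cl - cs) \<ge> 5 * (int l - int s)" by (simp add: algebra_simps)
    then have "cl - cs > 2 * (int l - int s)" using 1 by presburger
    then have "int (objective (x, y, z, s)) > cl" using e xs o nn by (smt (verit))
    then show ?thesis using ccl by simp
  next
    case 2 then have "int l < int s" by simp
    then have "int (objective (x, y, z, s)) > cl" using e xs o nn by (smt (verit) of_nat_0_le_iff)
    then show ?thesis using ccl by simp
  next
    case 3
    have sl: "int s = int l" using 3 by simp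
    have e2: "int x + int y + int z = cl" using e sl by linarith
    have lo: "cl \<le> int (objective (x, y, z, s))" using e2 o nn by linarith
    have hi: "int y = 0 \<and> int z = 0 \<and> int x = cl" if "int (objective (x, y, z, s)) = cl"
    proof -
      have "int y = 0" "int z = 0" using that e2 o nn by linarith+
      then show ?thesis using e2 by simp
    qed
    show ?thesis
    proof (intro conjI impI)
      show "int (l choose 2) \<le> int (objective (x, y, z, s))" using lo ccl by simp
    next
      assume "int (objective (x, y, z, s)) = int (l choose 2)"
      then have "int y = 0 \<and> int z = 0 \<and> int x = cl" using hi ccl by simp
      then have "y = 0" "z = 0" "x = l choose 2" using ccl by simp_all
      then show "(x, y, z, s) = (l choose 2, 0, 0, l)" using 3 by simp
    qed
  qed
qed

theorem lemma6:
  fixes l :: nat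
  assumes "l \<ge> 6"
  shows "{p. optimal l p} = {(l choose 2, 0, 0, l)}"
proof -
  have fe: "feasible l (l choose 2, 0, 0, l)" by (simp add: feasible_def)
  have ob: "objective (l choose 2, 0, 0, l) = l choose 2" by (simp add: objective_def)
  have lb: "l choose 2 \<le> objective q" if "feasible l q" for q
  proof -
    obtain x y z s where q: "q = (x,y,z,s)" by (cases q) auto
    have "feasible l (x,y,z,s)" using that q by blast
    then have "int (l choose 2) \<le> int (objective (x,y,z,s))" using key[OF assms] by blast
    then show ?thesis using q by (simp only: of_nat_le_iff)
  qed
  have opt: "optimal l (l choose 2, 0, 0, l)"
    unfolding optimal_def using fe lb ob by simp
  have "p = (l choose 2, 0, 0, l)" if "optimal l p" for p
  proof -
    obtain x y z s where p: "p = (x,y,z,s)" by (cases p) auto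
    have F: "feasible l (x,y,z,s)" using that p unfolding optimal_def by blast
    have A: "objective p \<le> objective (l choose 2, 0, 0, l)"
      using that fe unfolding optimal_def by blast
    then have "int (objective (x,y,z,s)) \<le> int (l choose 2)" using p ob by simp
    moreover have K: "int (l choose 2) \<le> int (objective (x,y,z,s)) \<and>
      (int (objective (x,y,z,s)) = int (l choose 2) \<longrightarrow> (x,y,z,s) = (l choose 2, 0, 0, l))"
      using key[OF assms F] .
    ultimately have "int (objective (x,y,z,s)) = int (l choose 2)" by linarith
    with K p show ?thesis by blast
  qed
  then show ?thesis using opt by blast
qed

end
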